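(* If a closed properly convex domain $\Omega\subset\mathbb{RP}^n$ is preserved by a linear flow $\Phi$, then $\Omega$ is reducible and $\Phi$ is hyperbolic.
   Context: $\Omega$ is properly convex if its closure is a compact convex subset of some affine chart. A properly convex set $\Omega$ is reducible if there are disjoint proper projective subspaces $\mathbb{RP}^a,\mathbb{RP}^b\subsetneq\mathbb{RP}^n$ such that every point of $\Omega$ lies on a line segment in $\Omega$ with one endpoint in $\mathbb{RP}^a\cap\mathrm{cl}\,\Omega$ and the other in $\mathbb{RP}^b\cap\mathrm{cl}\,\Omega$. A linear flow is an injective homomorphism $\Phi:\mathbb{R}\to\mathrm{PGL}(n+1,\mathbb{R})$ such that the orbit of every point is a proper subset of a projective line. It is hyperbolic if, after reparameterizing by an isomorphism of $\mathbb{R}$, there is a decomposition $\mathbb{R}^{n+1}=A\oplus B$ with $\Phi_t[a+b]=[a+e^tb]$ for $a\in A$, $b\in B$. *)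

theory Defs
  imports "HOL-Analysis.Analysis"
begin

text \<open>Model of RP^n: R^(n+1) is the type real^'n (n+1 = CARD('n)).
  A subset of RP^n is represented by its cone of nonzero representatives,
  i.e. a set of nonzero vectors closed under nonzero scaling.\<close>

definition proj_cone :: "'a::real_vector set \<Rightarrow> bool" where
  "proj_cone S \<longleftrightarrow> 0 \<notin> S \<and> (\<forall>v\<in>S. \<forall>c. c \<noteq> 0 \<longrightarrow> c *\<^sub>R v \<in> S)"

text \<open>Closure in RP^n (preimage of the projective closure).\<close>
definition proj_closure :: "'a::real_normed_vector set \<Rightarrow> 'a set" where
  "proj_closure S = closure S - {0}"

text \<open>Properly convex: the closure lies in the affine chart {[v]. w . v \<noteq> 0},
  and its image in that chart (identified with the affine hyperplane
  {v. w . v = 1}) is compact and convex.\<close>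
definition properly_convex :: "'a::real_inner set \<Rightarrow> bool" where
  "properly_convex S \<longleftrightarrow>
     (\<exists>w. (\<forall>v\<in>proj_closure S. inner w v \<noteq> 0)
        \<and> compact {v \<in> proj_closure S. inner w v = 1}
        \<and> convex {v \<in> proj_closure S. inner w v = 1})"

definition closed_properly_convex_domain :: "'a::real_inner set \<Rightarrow> bool" where
  "closed_properly_convex_domain S \<longleftrightarrow>
     proj_cone S \<and> proj_closure S = S \<and> interior S \<noteq> {} \<and> properly_convex S"

text \<open>A projective segment between [p],[q] is the image of the segment from p to q
  for suitable representatives p, q.\<close>
definition reducible :: "'a::real_inner set \<Rightarrow> bool" where
  "reducible S \<longleftrightarrow>
     (\<exists>U V. subspace U \<and> subspace V \<and> U \<noteq> {0} \<and> V \<noteq> {0}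
        \<and> U \<noteq> UNIV \<and> V \<noteq> UNIV \<and> U \<inter> V = {0}
        \<and> (\<forall>x\<in>S. \<exists>p q. p \<in> U \<inter> proj_closure S \<and> q \<in> V \<inter> proj_closure S
              \<and> open_segment p q \<subseteq> S
              \<and> (\<exists>y\<in>closed_segment p q. \<exists>c. c \<noteq> 0 \<and> x = c *\<^sub>R y)))"

text \<open>A (continuous) homomorphism R \<rightarrow> PGL(n+1,R) given by a continuous family of
  invertible matrices representing it (projective homomorphism: up to scalars).\<close>
definition linear_flow :: "(real \<Rightarrow> real^'n^'n) \<Rightarrow> bool" where
  "linear_flow M \<longleftrightarrow>
     continuous_on UNIV M
   \<and> (\<forall>t. invertible (M t))
   \<and> (\<forall>s t. \<exists>c. c \<noteq> 0 \<and> M (s + t) = c *\<^sub>R (M s ** M t))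
   \<and> (\<forall>s t c. M s = c *\<^sub>R M t \<longrightarrow> s = t)
   \<and> (\<forall>v::real^'n. v \<noteq> 0 \<longrightarrow>
        (\<exists>W. subspace W \<and> dim W = 2 \<and>
             {c *\<^sub>R (M t *v v) | c t. c \<noteq> 0} \<subset> W - {0}))"

definition hyperbolic_flow :: "(real \<Rightarrow> real^'n^'n) \<Rightarrow> bool" where
  "hyperbolic_flow M \<longleftrightarrow>
     (\<exists>lam A B. lam \<noteq> 0 \<and> subspace A \<and> subspace B \<and> A \<inter> B = {0}
        \<and> {a + b | a b. a \<in> A \<and> b \<in> B} = UNIV
        \<and> (\<forall>t. \<forall>a\<in>A. \<forall>b\<in>B. a + b \<noteq> 0 \<longrightarrow>
              (\<exists>c. c \<noteq> 0 \<and> M (lam * t) *v (a + b) = c *\<^sub>R (a + exp t *\<^sub>R b))))"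

definition preserves :: "(real \<Rightarrow> real^'n^'n) \<Rightarrow> (real^'n) set \<Rightarrow> bool" where
  "preserves M S \<longleftrightarrow> (\<forall>t. (\<lambda>v. M t *v v) ` S = S)"

end

theory Submission
  imports Defs
begin


locale fl =
  fixes Om :: "(real^'n) set" and M :: "real \<Rightarrow> real^'n^'n" and w :: "real^'n"
  assumes cone0: "0 \<notin> Om" and cone: "\<And>v c. v \<in> Om \<Longrightarrow> c \<noteq> 0 \<Longrightarrow> c *\<^sub>R v \<in> Om"
  and clo: "closure Om - {0} = Om"
  and intne: "interior Om \<noteq> {}"
  and wnz: "\<And>v. v \<in> Om \<Longrightarrow> inner w v \<noteq> 0"
  and cpt: "compact {v\<in>Om. inner w v = 1}"
  and cvx: "convex {v\<in>Om. inner w v = 1}"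
  and Mcont: "continuous_on UNIV M"
  and Minv: "\<And>t. invertible (M t)"
  and Mhom: "\<And>s t. \<exists>c. c \<noteq> 0 \<and> M (s + t) = c *\<^sub>R (M s ** M t)"
  and Minj: "\<And>s t c. M s = c *\<^sub>R M t \<Longrightarrow> s = t"
  and orbit: "\<And>v. v \<noteq> 0 \<Longrightarrow> \<exists>W. subspace W \<and> dim W = 2 \<and>
             {c *\<^sub>R (M t *v v) | c t. c \<noteq> 0} \<subset> W - {0}"
  and pres: "\<And>t. (\<lambda>v. M t *v v) ` Om = Om"
begin

lemma cone_iff: "c \<noteq> 0 \<Longrightarrow> c *\<^sub>R v \<in> Om \<longleftrightarrow> v \<in> Om"
  using cone[of "c *\<^sub>R v" "inverse c"] cone[of v c] by auto

lemma neg_in: "- v \<in> Om \<longleftrightarrow> v \<in> Om"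
  using cone_iff[of "-1" v] by simp

lemma closure_sub: "closure Om \<subseteq> Om \<union> {0}"
  using clo by blast

lemma in_Om_nz: "v \<in> Om \<Longrightarrow> v \<noteq> 0"
  using cone0 by auto

lemma half_convex_pos:
  assumes u: "u \<in> Om" and v: "v \<in> Om" and pu: "inner w u > 0" and pv: "inner w v > 0"
  shows "closed_segment u v \<subseteq> Om"
proof
  fix p assume "p \<in> closed_segment u v"
  then obtain th where th: "0 \<le> th" "th \<le> 1" and p: "p = (1 - th) *\<^sub>R u + th *\<^sub>R v"
    unfolding closed_segment_def by auto
  define a where "a = (1 - th) * inner w u"
  define b where "b = th * inner w v"
  have a0: "a \<ge> 0" and b0: "b \<ge> 0" using th pu pv by (auto simp: a_def b_def)
  have ab: "a + b > 0"
  proof (cases "th = 0")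
    case True then show ?thesis using pu by (simp add: a_def b_def)
  next
    case False then show ?thesis using th pv a0 by (simp add: b_def add_nonneg_pos)
  qed
  define u' where "u' = (1 / inner w u) *\<^sub>R u"
  define v' where "v' = (1 / inner w v) *\<^sub>R v"
  have u': "u' \<in> {v\<in>Om. inner w v = 1}" using u pu cone[of u "1 / inner w u"]
    by (auto simp: u'_def)
  have v': "v' \<in> {x\<in>Om. inner w x = 1}" using v pv cone[of v "1 / inner w v"]
    by (auto simp: v'_def)
  have q: "(a/(a+b)) *\<^sub>R u' + (b/(a+b)) *\<^sub>R v' \<in> {x\<in>Om. inner w x = 1}"
    apply (rule convexD[OF cvx u' v'])
    using a0 b0 ab by (auto simp: add_divide_distrib[symmetric])
  have "p = (a+b) *\<^sub>R ((a/(a+b)) *\<^sub>R u' + (b/(a+b)) *\<^sub>R v')"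
    using ab pu pv unfolding p u'_def v'_def a_def b_def
    by (simp add: scaleR_add_right)
  then show "p \<in> Om" using q cone ab by auto
qed

lemma half_convex:
  assumes u: "u \<in> Om" and v: "v \<in> Om" and s: "inner w u * inner w v > 0"
  shows "closed_segment u v \<subseteq> Om"
proof (cases "inner w u > 0")
  case True
  then have "inner w v > 0" using s by (simp add: zero_less_mult_iff)
  then show ?thesis using half_convex_pos u v True by blast
next
  case False
  then have a: "inner w (-u) > 0" "inner w (-v) > 0" using s by (auto simp: zero_less_mult_iff)
  have "closed_segment (-u) (-v) \<subseteq> Om"
    using half_convex_pos[OF _ _ a] u v neg_in by blast
  moreover have "closed_segment u v = uminus ` closed_segment (-u) (-v)"
  proof -
    have "closed_segment u v = (\<lambda>x. - x) ` closed_segment (-u) (-v)"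
      using closed_segment_linear_image[OF linear_uminus, of "-u" "-v"] by simp
    then show ?thesis by simp
  qed
  ultimately show ?thesis using neg_in by auto
qed

lemma Minj_vec: "M t *v u = M t *v v \<Longrightarrow> u = v"
proof -
  assume h: "M t *v u = M t *v v"
  obtain B where "B ** M t = mat 1" using Minv invertible_left_inverse by blast
  then show "u = v" using h by (metis matrix_vector_mul_assoc matrix_vector_mul_lid)
qed

lemma M_in: "M t *v v \<in> Om \<longleftrightarrow> v \<in> Om"
proof
  assume "M t *v v \<in> Om"
  then obtain v' where "v' \<in> Om" "M t *v v = M t *v v'" using pres[of t] by blast
  then show "v \<in> Om" using Minj_vec by metis
next
  assume "v \<in> Om" then show "M t *v v \<in> Om" using pres[of t] by blast
qed

lemma M_comp: "\<exists>c. c \<noteq> 0 \<and> M s *v (M t *v v) = c *\<^sub>R (M (s+t) *v v)"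
proof -
  obtain c where c: "c \<noteq> 0" "M (s + t) = c *\<^sub>R (M s ** M t)" using Mhom by blast
  then have "M s *v (M t *v v) = (1/c) *\<^sub>R (M (s+t) *v v)"
    by (simp add: matrix_vector_mul_assoc scaleR_matrix_vector_assoc[symmetric])
  then show ?thesis using c by (intro exI[of _ "1/c"]) auto
qed

lemma M0: "\<exists>mu. mu \<noteq> 0 \<and> M 0 = mu *\<^sub>R mat 1"
proof -
  obtain c where c: "c \<noteq> 0" "M (0 + 0) = c *\<^sub>R (M 0 ** M 0)" using Mhom by blast
  obtain B where B: "M 0 ** B = mat 1" using Minv invertible_right_inverse by blast
  have "mat 1 = c *\<^sub>R (M 0 ** M 0) ** B" using c B by simp
  also have "\<dots> = c *\<^sub>R M 0" using B by (simp add: matrix_mul_assoc[symmetric] scalar_matrix_assoc[symmetric])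
  finally have "M 0 = (1/c) *\<^sub>R mat 1" using c by simp
  then show ?thesis using c by (intro exI[of _ "1/c"]) auto
qed

lemma M0v: "\<exists>mu. mu \<noteq> 0 \<and> M 0 *v v = mu *\<^sub>R v"
  using M0 by (metis matrix_vector_mul_lid scaleR_matrix_vector_assoc)


definition ceig :: "real^'n \<Rightarrow> bool" where
  "ceig e \<longleftrightarrow> e \<noteq> 0 \<and> (\<forall>t. \<exists>l. M t *v e = l *\<^sub>R e)"

lemma sq_fix:
  fixes T :: "real^'n^'n"
  assumes inj: "\<And>a b. T *v a = T *v b \<Longrightarrow> a = b"
    and pq: "\<And>c. p \<noteq> c *\<^sub>R q" and qp: "\<And>c. q \<noteq> c *\<^sub>R p"
    and Tp: "(\<exists>c. T *v p = c *\<^sub>R p) \<or> (\<exists>c. T *v p = c *\<^sub>R q)"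
    and Tq: "(\<exists>c. T *v q = c *\<^sub>R p) \<or> (\<exists>c. T *v q = c *\<^sub>R q)"
  shows "\<exists>c. T *v (T *v p) = c *\<^sub>R p"
proof -
  have q0: "q \<noteq> 0" using pq[of 0] qp[of 0] by auto
  show ?thesis
  proof (cases "\<exists>c. T *v p = c *\<^sub>R p")
    case True
    then obtain c where c: "T *v p = c *\<^sub>R p" by blast
    then have "T *v (T *v p) = (c*c) *\<^sub>R p" by (simp add: matrix_vector_mult_scaleR)
    then show ?thesis by blast
  next
    case False
    then obtain c where c: "T *v p = c *\<^sub>R q" using Tp by blast
    show ?thesis
    proof (cases "\<exists>d. T *v q = d *\<^sub>R p")
      case True
      then obtain d where d: "T *v q = d *\<^sub>R p" by blast
      then have "T *v (T *v p) = (c*d) *\<^sub>R p" using c by (simp add: matrix_vector_mult_scaleR)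
      then show ?thesis by blast
    next
      case False
      then obtain d where d: "T *v q = d *\<^sub>R q" using Tq by blast
      have d0: "d \<noteq> 0"
      proof
        assume "d = 0"
        then have "T *v q = T *v 0" using d by simp
        then show False using inj q0 by blast
      qed
      have "T *v p = T *v ((c/d) *\<^sub>R q)" using c d d0 by (simp add: matrix_vector_mult_scaleR)
      then have "p = (c/d) *\<^sub>R q" using inj by blast
      then show ?thesis using pq by blast
    qed
  qed
qed


lemma interior_in_span:
  assumes xi: "x \<in> interior Om"
  shows "x \<in> span (Collect ceig)"
proof (cases "ceig x")
  case True then show ?thesis by (simp add: span_base)
next
  case False
  have xO: "x \<in> Om" using xi interior_subset by blast
  have x0: "x \<noteq> 0" using xO cone0 by auto
  have wx: "inner w x \<noteq> 0" using wnz xO by blast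
  obtain t0 where t0: "\<And>l. M t0 *v x \<noteq> l *\<^sub>R x" using False x0 unfolding ceig_def by blast
  define z where "z = M t0 *v x"
  obtain W where Ws: "subspace W" and Wd: "dim W = 2"
    and Wo: "{c *\<^sub>R (M t *v x) | c t. c \<noteq> 0} \<subset> W - {0}"
    using orbit[OF x0] by blast
  have MW: "M t *v x \<in> W" for t
  proof -
    have "1 *\<^sub>R (M t *v x) \<in> {c *\<^sub>R (M t *v x) | c t. c \<noteq> 0}"
      by (rule CollectI, rule exI[of _ 1], rule exI[of _ t]) simp
    then have "1 *\<^sub>R (M t *v x) \<in> W - {0}" by (rule subsetD[OF psubset_imp_subset[OF Wo]])
    then show ?thesis by simp
  qed
  have xW: "x \<in> W"
  proof -
    obtain mu where mu: "mu \<noteq> 0" "M 0 *v x = mu *\<^sub>R x" using M0v by blast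
    have "(1/mu) *\<^sub>R (M 0 *v x) \<in> W" using MW Ws subspace_scale by blast
    then show ?thesis using mu by simp
  qed
  have zW: "z \<in> W" using MW z_def by simp
  have zsp: "z \<notin> span {x}" using t0 unfolding z_def span_singleton by auto
  have ind: "independent {z, x}"
    using zsp x0 by (intro independent_insertI) (auto intro: independent_insertI simp: independent_empty)
  have zx: "z \<noteq> x" using zsp span_base by blast
  have Wsp: "W \<subseteq> span {z, x}"
  proof -
    have "card {z,x} = dim W" using Wd zx by simp
    then show ?thesis using card_eq_dim[of "{z,x}" W] ind zW xW by simp
  qed
  define y where "y = inner w z *\<^sub>R x - inner w x *\<^sub>R z"
  have wy: "inner w y = 0" unfolding y_def by (simp add: inner_diff_right algebra_simps)
  have Wrep: "\<exists>a b. v = a *\<^sub>R x + b *\<^sub>R y" if "v \<in> W" for v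
  proof -
    have "v \<in> span {z, x}" using that Wsp by blast
    then obtain a b where v: "v = b *\<^sub>R z + a *\<^sub>R x"
      unfolding span_insert span_singleton by (auto simp: diff_eq_eq add.commute)
    have e1: "(- b / inner w x) *\<^sub>R y = (- (b * inner w z / inner w x)) *\<^sub>R x + b *\<^sub>R z"
      unfolding y_def scaleR_diff_right scaleR_scaleR using wx by simp
    have "v = (a + b * inner w z / inner w x) *\<^sub>R x + (- b / inner w x) *\<^sub>R y"
      unfolding e1 v scaleR_add_left scaleR_minus_left by simp
    then show ?thesis by blast
  qed
  have yW: "y \<in> W" unfolding y_def using xW zW Ws
    by (simp add: subspace_diff subspace_scale)
  have y0: "y \<noteq> 0"
  proof
    assume "y = 0"
    then have "inner w x *\<^sub>R z = inner w z *\<^sub>R x" unfolding y_def by simp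
    then have "(1 / inner w x) *\<^sub>R (inner w x *\<^sub>R z) = (inner w z / inner w x) *\<^sub>R x"
      by simp
    then have "z = (inner w z / inner w x) *\<^sub>R x" using wx by simp
    then show False using t0 z_def by metis
  qed
  define I where "I = {s. x + s *\<^sub>R y \<in> Om}"
  have lw: "inner w (x + s *\<^sub>R y) = inner w x" for s using wy by (simp add: inner_add_right)
  have I0: "0 \<in> I" using xO I_def by simp
  obtain dl where dl: "dl > 0" "\<And>s. \<bar>s\<bar> < dl \<Longrightarrow> s \<in> I"
  proof -
    obtain e where e: "e > 0" "ball x e \<subseteq> Om" using xi mem_interior by blast
    have ny: "norm y > 0" using y0 by simp
    have "s \<in> I" if "\<bar>s\<bar> < e / norm y" for s
    proof -
      have "dist x (x + s *\<^sub>R y) = \<bar>s\<bar> * norm y" by (simp add: dist_norm)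
      also have "\<dots> < e" using that ny by (simp add: pos_less_divide_eq)
      finally show ?thesis using e I_def by auto
    qed
    then show ?thesis using that[of "e / norm y"] e ny by simp
  qed
  obtain Bd where Bd: "\<And>s. s \<in> I \<Longrightarrow> \<bar>s\<bar> \<le> Bd"
  proof -
    obtain a where a: "\<And>v. v \<in> {v\<in>Om. inner w v = 1} \<Longrightarrow> norm v \<le> a"
      using compact_imp_bounded[OF cpt] unfolding bounded_iff by blast
    have ny: "norm y > 0" using y0 by simp
    have "\<bar>s\<bar> \<le> (a * \<bar>inner w x\<bar> + norm x) / norm y" if "s \<in> I" for s
    proof -
      have "(1 / inner w x) *\<^sub>R (x + s *\<^sub>R y) \<in> {v\<in>Om. inner w v = 1}"
        using that wx cone[of "x + s *\<^sub>R y" "1 / inner w x"] lw[of s] unfolding I_def by auto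
      then have "norm ((1 / inner w x) *\<^sub>R (x + s *\<^sub>R y)) \<le> a" using a by blast
      then have "norm (x + s *\<^sub>R y) / \<bar>inner w x\<bar> \<le> a" by simp
      then have n1: "norm (x + s *\<^sub>R y) \<le> a * \<bar>inner w x\<bar>" using wx by (simp add: divide_le_eq)
      have "\<bar>s\<bar> * norm y = norm (s *\<^sub>R y)" by simp
      also have "\<dots> \<le> norm (x + s *\<^sub>R y) + norm x" using norm_triangle_ineq4[of "x + s *\<^sub>R y" x] by simp
      finally have "\<bar>s\<bar> * norm y \<le> a * \<bar>inner w x\<bar> + norm x" using n1 by linarith
      then show ?thesis using ny by (simp add: pos_le_divide_eq)
    qed
    then show ?thesis using that by blast
  qed
  have Iclosed: "closed I"
  proof -
    have "I = (\<lambda>s. x + s *\<^sub>R y) -` closure Om"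
    proof
      show "I \<subseteq> (\<lambda>s. x + s *\<^sub>R y) -` closure Om" using closure_subset I_def by auto
      show "(\<lambda>s. x + s *\<^sub>R y) -` closure Om \<subseteq> I"
      proof
        fix s assume "s \<in> (\<lambda>s. x + s *\<^sub>R y) -` closure Om"
        moreover have "x + s *\<^sub>R y \<noteq> 0" using lw[of s] wx by auto
        ultimately show "s \<in> I" using closure_sub I_def by auto
      qed
    qed
    moreover have "continuous_on UNIV (\<lambda>s. x + s *\<^sub>R y)" by (intro continuous_intros)
    ultimately show ?thesis by (simp add: closed_vimage)
  qed
  have Iconv: "r \<in> I" if "s \<in> I" "s' \<in> I" "s \<le> r" "r \<le> s'" for s s' r
  proof (cases "s = s'")
    case True then show ?thesis using that by simp
  next
    case False
    then have ss: "s < s'" using that by simp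
    define th where "th = (r - s) / (s' - s)"
    have th: "0 \<le> th" "th \<le> 1" using that ss by (auto simp: th_def divide_simps)
    have e: "(1 - th) *\<^sub>R (x + s *\<^sub>R y) + th *\<^sub>R (x + s' *\<^sub>R y) = x + r *\<^sub>R y"
    proof -
      have h1: "th * (s' - s) = r - s" using ss by (simp add: th_def)
      have "(1 - th) * s + th * s' = s + th * (s' - s)" by (simp add: algebra_simps)
      then have "(1 - th) * s + th * s' = r" using h1 by simp
      then show ?thesis by (simp add: algebra_simps flip: scaleR_add_left)
    qed
    have "inner w (x + s *\<^sub>R y) * inner w (x + s' *\<^sub>R y) > 0" using lw wx by (simp add: not_square_less_zero less_le)
    then have "closed_segment (x + s *\<^sub>R y) (x + s' *\<^sub>R y) \<subseteq> Om"
      using half_convex that I_def by auto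
    moreover have "x + r *\<^sub>R y \<in> closed_segment (x + s *\<^sub>R y) (x + s' *\<^sub>R y)"
      unfolding closed_segment_def using th e[symmetric] by (intro CollectI exI[of _ th]) simp
    ultimately show ?thesis using I_def by auto
  qed
  define s1 where "s1 = Inf I"
  define s2 where "s2 = Sup I"
  have bb: "bdd_below I" "bdd_above I" using Bd unfolding bdd_below_def bdd_above_def
    by (metis abs_le_D1 abs_le_iff minus_le_iff)+
  have s1I: "s1 \<in> I" using closed_contains_Inf[of I] I0 bb Iclosed s1_def by blast
  have s2I: "s2 \<in> I" using closed_contains_Sup[of I] I0 bb Iclosed s2_def by blast
  have I_iff: "s \<in> I \<longleftrightarrow> s1 \<le> s \<and> s \<le> s2" for s
    using Iconv[OF s1I s2I] cInf_lower[OF _ bb(1)] cSup_upper[OF _ bb(2)] s1_def s2_def by blast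
  have s12: "s1 < s2"
  proof -
    have "dl/2 \<in> I" "-(dl/2) \<in> I" using dl by auto
    then have "s1 \<le> -(dl/2)" "dl/2 \<le> s2" using I_iff by blast+
    then show ?thesis using dl by linarith
  qed
  have spW: "span {z, x} \<subseteq> W" by (rule span_minimal[OF _ Ws]) (use zW xW in auto)
  have MWW: "M s *v v \<in> W" if "v \<in> W" for s v
  proof -
    obtain c where c: "c \<noteq> 0" "M s *v (M t0 *v x) = c *\<^sub>R (M (s+t0) *v x)" using M_comp by blast
    have "M s *v z \<in> W" using c MW Ws subspace_scale z_def by metis
    then have "(\<lambda>v. M s *v v) ` {z, x} \<subseteq> W" using MW by auto
    then have "span ((\<lambda>v. M s *v v) ` {z, x}) \<subseteq> W" by (rule span_minimal[OF _ Ws])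
    moreover have e: "span ((\<lambda>v. M s *v v) ` {z, x}) = (\<lambda>v. M s *v v) ` span {z, x}"
      by (rule span_linear_image[OF matrix_vector_mul_linear])
    ultimately have "(\<lambda>v. M s *v v) ` span {z, x} \<subseteq> W" by (simp only: e)
    then show ?thesis using that Wsp by blast
  qed
  have combW: "a *\<^sub>R x + b *\<^sub>R y \<in> W" for a b
    using xW yW Ws by (intro subspace_add subspace_scale) auto
  define p where "p = x + s1 *\<^sub>R y"
  define q where "q = x + s2 *\<^sub>R y"
  have pO: "p \<in> Om" and qO: "q \<in> Om" using s1I s2I I_def p_def q_def by auto
  have pW: "p \<in> W" and qW: "q \<in> W" using combW[of 1 s1] combW[of 1 s2] p_def q_def by simp_all
  define ep where "ep = (\<lambda>v. v \<in> Om \<and> v \<in> W \<and> (\<exists>u\<in>W. \<forall>e>0. v + e *\<^sub>R u \<notin> Om))"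
  have ep_q: "ep q"
  proof -
    have "q + e *\<^sub>R y \<notin> Om" if "e > 0" for e
    proof -
      have "q + e *\<^sub>R y = x + (s2 + e) *\<^sub>R y" by (simp add: q_def scaleR_add_left)
      moreover have "s2 + e \<notin> I" using I_iff that by simp
      ultimately show ?thesis using I_def by simp
    qed
    then show ?thesis unfolding ep_def using qO qW yW by blast
  qed
  have ep_p: "ep p"
  proof -
    have "p + e *\<^sub>R (-y) \<notin> Om" if "e > 0" for e
    proof -
      have "p + e *\<^sub>R (-y) = x + (s1 - e) *\<^sub>R y" by (simp add: p_def scaleR_diff_left)
      moreover have "s1 - e \<notin> I" using I_iff that by simp
      ultimately show ?thesis using I_def by simp
    qed
    moreover have "-y \<in> W" using yW Ws subspace_neg by blast
    ultimately show ?thesis unfolding ep_def using pO pW by blast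
  qed
  have ep_M: "ep (M s *v v)" if epv: "ep v" for s v
  proof -
    obtain u where u: "u \<in> W" "\<And>e. e > 0 \<Longrightarrow> v + e *\<^sub>R u \<notin> Om" using epv ep_def by blast
    have "M s *v v + e *\<^sub>R (M s *v u) \<notin> Om" if "e > 0" for e
      using u(2)[OF that] M_in[of s "v + e *\<^sub>R u"]
      by (simp add: matrix_vector_right_distrib matrix_vector_mult_scaleR)
    moreover have "M s *v u \<in> W" using MWW u by blast
    moreover have "M s *v v \<in> Om" "M s *v v \<in> W" using epv ep_def M_in MWW by auto
    ultimately show ?thesis unfolding ep_def by blast
  qed
  have ep_char: "(\<exists>c. v = c *\<^sub>R p) \<or> (\<exists>c. v = c *\<^sub>R q)" if epv: "ep v" for v
  proof -
    have vO: "v \<in> Om" and vW: "v \<in> W" using epv ep_def by auto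
    obtain u where uW: "u \<in> W" and u: "\<And>e. e > 0 \<Longrightarrow> v + e *\<^sub>R u \<notin> Om" using epv ep_def by blast
    obtain al be where v: "v = al *\<^sub>R x + be *\<^sub>R y" using Wrep vW by blast
    have "inner w v = al * inner w x" using wy by (simp add: v inner_add_right)
    then have al0: "al \<noteq> 0" using wnz vO by auto
    define s where "s = be / al"
    have vs: "v = al *\<^sub>R (x + s *\<^sub>R y)" using al0 by (simp add: v s_def scaleR_add_right)
    have sI: "s \<in> I" using vO vs cone_iff[OF al0] I_def by simp
    show ?thesis
    proof (cases "s = s1 \<or> s = s2")
      case True then show ?thesis using vs p_def q_def by blast
    next
      case False
      then have ss: "s1 < s" "s < s2" using sI I_iff by auto
      obtain ga de where uu: "u = ga *\<^sub>R x + de *\<^sub>R y" using Wrep uW by blast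
      define f where "f = (\<lambda>e::real. (be + e * de) / (al + e * ga))"
      have "((\<lambda>e::real. al + e * ga) \<longlongrightarrow> al + 0 * ga) (at_right 0)"
        by (intro tendsto_intros)
      then have lim1: "((\<lambda>e::real. al + e * ga) \<longlongrightarrow> al) (at_right 0)" by simp
      have "(f \<longlongrightarrow> (be + 0 * de) / (al + 0 * ga)) (at_right 0)"
        unfolding f_def using al0 by (intro tendsto_intros) auto
      then have lim2: "(f \<longlongrightarrow> s) (at_right 0)" by (simp add: s_def)
      have e1: "eventually (\<lambda>e. 0 < e) (at_right (0::real))" by (rule eventually_at_right_less)
      have e2: "eventually (\<lambda>e. al + e * ga \<noteq> 0) (at_right 0)"
        by (rule tendsto_imp_eventually_ne[OF lim1 al0])
      have e3: "eventually (\<lambda>e. s1 < f e) (at_right 0)" by (rule order_tendstoD(1)[OF lim2 ss(1)])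
      have e4: "eventually (\<lambda>e. f e < s2) (at_right 0)" by (rule order_tendstoD(2)[OF lim2 ss(2)])
      have ev: "eventually (\<lambda>e. 0 < e \<and> al + e * ga \<noteq> 0 \<and> s1 < f e \<and> f e < s2) (at_right 0)"
        using e1 e2 e3 e4 by (intro eventually_conj)
      then obtain e where e: "0 < e" "al + e * ga \<noteq> 0" "s1 < f e" "f e < s2"
        using eventually_happens[OF ev] trivial_limit_at_right_real by blast
      have "f e \<in> I" using e I_iff by simp
      then have "(al + e * ga) *\<^sub>R (x + f e *\<^sub>R y) \<in> Om" using cone e(2) I_def by simp
      moreover have "(al + e * ga) *\<^sub>R (x + f e *\<^sub>R y) = (al + e * ga) *\<^sub>R x + (be + e * de) *\<^sub>R y"
        using e(2) by (simp add: f_def scaleR_add_right)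
      moreover have "(al + e * ga) *\<^sub>R x + (be + e * de) *\<^sub>R y = v + e *\<^sub>R u"
        by (simp add: v uu algebra_simps)
      ultimately show ?thesis using u[OF e(1)] by simp
    qed
  qed
  have pq: "p \<noteq> c *\<^sub>R q" for c
  proof
    assume h: "p = c *\<^sub>R q"
    have "inner w p = inner w x" "inner w q = inner w x" using lw p_def q_def by auto
    then have "inner w x = c * inner w x" using h by simp
    then have "c = 1" using wx by simp
    then have "(s2 - s1) *\<^sub>R y = 0" using h by (simp add: p_def q_def scaleR_diff_left) auto
    then show False using s12 y0 by simp
  qed
  have qp: "q \<noteq> c *\<^sub>R p" for c
  proof
    assume h: "q = c *\<^sub>R p"
    have "inner w p = inner w x" "inner w q = inner w x" using lw p_def q_def by auto
    then have "inner w x = c * inner w x" using h by simp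
    then have "c = 1" using wx by simp
    then have "(s2 - s1) *\<^sub>R y = 0" using h by (simp add: p_def q_def scaleR_diff_left)
    then show False using s12 y0 by simp
  qed
  have fixp: "\<exists>l. M s *v v = l *\<^sub>R v" if "v = p \<or> v = q" for s v
  proof -
    define T where "T = M (s/2)"
    obtain c where c: "M (s/2 + s/2) = c *\<^sub>R (T ** T)" using Mhom T_def by blast
    have Tp: "(\<exists>c. T *v p = c *\<^sub>R p) \<or> (\<exists>c. T *v p = c *\<^sub>R q)"
      using ep_char[OF ep_M[OF ep_p]] T_def by blast
    have Tq: "(\<exists>c. T *v q = c *\<^sub>R p) \<or> (\<exists>c. T *v q = c *\<^sub>R q)"
      using ep_char[OF ep_M[OF ep_q]] T_def by blast
    have injT: "\<And>a b. T *v a = T *v b \<Longrightarrow> a = b" using Minj_vec T_def by blast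
    have "\<exists>d. T *v (T *v v) = d *\<^sub>R v"
    proof (cases "v = p")
      case True then show ?thesis using sq_fix[OF injT pq qp Tp Tq] by blast
    next
      case False
      then have "v = q" using that by blast
      have Tq': "(\<exists>c. T *v q = c *\<^sub>R q) \<or> (\<exists>c. T *v q = c *\<^sub>R p)" using Tq by blast
      have Tp': "(\<exists>c. T *v p = c *\<^sub>R q) \<or> (\<exists>c. T *v p = c *\<^sub>R p)" using Tp by blast
      show ?thesis using sq_fix[OF injT qp pq Tq' Tp'] \<open>v = q\<close> by blast
    qed
    then obtain d where d: "T *v (T *v v) = d *\<^sub>R v" by blast
    have "M s *v v = c *\<^sub>R (T *v (T *v v))"
      using c by (simp add: matrix_vector_mul_assoc scaleR_matrix_vector_assoc[symmetric])
    then have "M s *v v = (c * d) *\<^sub>R v" using d by simp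
    then show ?thesis by blast
  qed
  have cp: "ceig p" and cq: "ceig q"
    unfolding ceig_def using fixp in_Om_nz pO qO by auto
  have eqx: "(s2 - s1) *\<^sub>R x = s2 *\<^sub>R p - s1 *\<^sub>R q"
    by (simp add: p_def q_def algebra_simps)
  have "x = (1 / (s2 - s1)) *\<^sub>R ((s2 - s1) *\<^sub>R x)" using s12 by simp
  then have "x = (1 / (s2 - s1)) *\<^sub>R (s2 *\<^sub>R p - s1 *\<^sub>R q)" by (simp only: eqx)
  moreover have "s2 *\<^sub>R p - s1 *\<^sub>R q \<in> span (Collect ceig)"
    using cp cq by (intro span_diff span_scale span_base) auto
  ultimately show ?thesis using span_scale by metis
qed

end



lemma additive_cont_linear:
  fixes g :: "real \<Rightarrow> real"
  assumes add: "\<And>s t. g (s + t) = g s + g t" and cont: "continuous_on UNIV g"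
  shows "g t = g 1 * t"
proof -
  have g0: "g 0 = 0" using add[of 0 0] by simp
  have gneg: "g (- t) = - g t" for t using add[of t "-t"] g0 by simp
  have gnat: "g (real n * t) = real n * g t" for n t
    by (induction n) (auto simp: g0 distrib_right add)
  have gint: "g (of_int k * t) = of_int k * g t" for k t
  proof (cases "k \<ge> 0")
    case True
    then obtain n where n: "k = int n" using nonneg_int_cases by blast
    show ?thesis using gnat[of n t] n by simp
  next
    case False
    then have "k \<le> 0" by simp
    then obtain n where n: "k = - int n" using nonpos_int_cases[of k] by blast
    have "g (of_int k * t) = g (- (real n * t))" using n by simp
    also have "\<dots> = - (real n * g t)" by (simp only: gneg gnat)
    finally show ?thesis using n by simp
  qed
  have grat: "g r = g 1 * r" if rQ: "r \<in> \<rat>" for r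
  proof -
    obtain a b where ab: "b > 0" "r = of_int a / of_int b" by (rule Rats_cases'[OF rQ]) blast
    have "of_int b * g r = g (of_int b * r)" using gint by simp
    also have "of_int b * r = of_int a" using ab by simp
    also have "g (of_int a) = of_int a * g 1" using gint[of a 1] by simp
    finally have "of_int b * g r = of_int a * g 1" .
    then have h: "of_int b * g r = of_int a * g 1" .
    have "g r = (of_int b * g r) / of_int b" using ab(1) by simp
    also have "\<dots> = (of_int a / of_int b) * g 1" unfolding h by simp
    finally have "g r = (of_int a / of_int b) * g 1" .
    then show ?thesis using ab(2) by simp
  qed
  have c1: "continuous_on UNIV (\<lambda>t. g t - g 1 * t)" by (intro continuous_intros cont)
  have c2: "continuous_on (closure \<rat>) (\<lambda>t. g t - g 1 * t)" using c1 by (simp only: Rats_closure_real)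
  have t: "t \<in> closure \<rat>" by (simp only: Rats_closure_real UNIV_I)
  have "g t - g 1 * t = 0"
  proof (rule continuous_constant_on_closure[OF c2 _ t])
    fix x :: real assume "x \<in> \<rat>"
    then have "g x = g 1 * x" by (rule grat)
    then show "g x - g 1 * x = 0" by (simp only: diff_self)
  qed
  then show ?thesis by simp
qed




lemma det3:
  fixes a b c x1 x2 x3 y1 y2 y3 :: real
  assumes e1: "a + b*x1 + c*y1 = 0" and e2: "a + b*x2 + c*y2 = 0" and e3: "a + b*x3 + c*y3 = 0"
    and nz: "\<not>(a = 0 \<and> b = 0 \<and> c = 0)"
  shows "(x2 - x1)*(y3 - y1) = (x3 - x1)*(y2 - y1)"
proof -
  have f2: "b*(x2 - x1) + c*(y2 - y1) = 0" using e1 e2 by (simp add: algebra_simps)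
  have f3: "b*(x3 - x1) + c*(y3 - y1) = 0" using e1 e3 by (simp add: algebra_simps)
  define D where "D = (x2 - x1)*(y3 - y1) - (x3 - x1)*(y2 - y1)"
  have "D * b = (y3 - y1) * (b*(x2 - x1) + c*(y2 - y1)) - (y2 - y1) * (b*(x3 - x1) + c*(y3 - y1))"
    unfolding D_def by (simp add: algebra_simps)
  then have Db: "D * b = 0" using f2 f3 by simp
  have "D * c = (x2 - x1) * (b*(x3 - x1) + c*(y3 - y1)) - (x3 - x1) * (b*(x2 - x1) + c*(y2 - y1))"
    unfolding D_def by (simp add: algebra_simps)
  then have Dc: "D * c = 0" using f2 f3 by simp
  show ?thesis
  proof (cases "b = 0 \<and> c = 0")
    case True then show ?thesis using e1 nz by simp
  next
    case False then have "D = 0" using Db Dc by auto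
    then show ?thesis unfolding D_def by simp
  qed
qed

lemma char_alg:
  fixes A B :: "real \<Rightarrow> real"
  assumes AB: "\<And>s t. A s * B t = B s * A t"
    and Am: "\<And>s t. A (s + t) + 1 = (A s + 1) * (A t + 1)"
    and Bm: "\<And>s t. B (s + t) + 1 = (B s + 1) * (B t + 1)"
    and s0: "A s0 \<noteq> 0"
  shows "(\<forall>t. B t = 0) \<or> (\<forall>t. B t = A t)"
proof -
  define k where "k = B s0 / A s0"
  have Bk: "B t = k * A t" for t
  proof -
    have "A s0 * B t = B s0 * A t" by (rule AB)
    then show ?thesis using s0 unfolding k_def by (simp add: field_simps)
  qed
  have "B (s0 + s0) + 1 = (B s0 + 1) * (B s0 + 1)" by (rule Bm)
  then have "k * A (s0 + s0) + 1 = (k * A s0 + 1) * (k * A s0 + 1)" by (simp only: Bk)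
  moreover have "A (s0 + s0) = (A s0 + 1) * (A s0 + 1) - 1" using Am[of s0 s0] by simp
  ultimately have "k * ((A s0 + 1) * (A s0 + 1) - 1) + 1 = (k * A s0 + 1) * (k * A s0 + 1)" by simp
  then have "(k * k - k) * (A s0 * A s0) = 0" by (simp add: algebra_simps)
  then have "k * (k - 1) = 0" using s0 by (simp add: algebra_simps)
  then have "k = 0 \<or> k = 1" by simp
  then show ?thesis using Bk by auto
qed




context fl begin

lemma eig_nz: "M t *v e = l *\<^sub>R e \<Longrightarrow> e \<noteq> 0 \<Longrightarrow> l \<noteq> 0"
  using Minj_vec[of t e 0] by auto

lemma Mlin2: "M t *v (a *\<^sub>R u + b *\<^sub>R v) = a *\<^sub>R (M t *v u) + b *\<^sub>R (M t *v v)"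
  by (simp add: matrix_vector_right_distrib matrix_vector_mult_scaleR)

lemma indep2:
  assumes e1: "e1 \<noteq> 0" and e2: "e2 \<noteq> 0"
    and h1: "\<And>t. M t *v e1 = c1 t *\<^sub>R e1" and h2: "\<And>t. M t *v e2 = c2 t *\<^sub>R e2"
    and d: "c1 \<noteq> c2" and z: "a1 *\<^sub>R e1 + a2 *\<^sub>R e2 = 0"
  shows "a1 = 0 \<and> a2 = 0"
proof -
  obtain t where t: "c1 t \<noteq> c2 t" using d by blast
  have "M t *v (a1 *\<^sub>R e1 + a2 *\<^sub>R e2) = 0" using z by simp
  then have z1: "(a1 * c1 t) *\<^sub>R e1 + (a2 * c2 t) *\<^sub>R e2 = 0" by (simp add: Mlin2 h1 h2)
  have z2: "c2 t *\<^sub>R (a1 *\<^sub>R e1 + a2 *\<^sub>R e2) = 0" using z by simp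
  have "(a1 * c1 t) *\<^sub>R e1 + (a2 * c2 t) *\<^sub>R e2 - c2 t *\<^sub>R (a1 *\<^sub>R e1 + a2 *\<^sub>R e2) = 0"
    using z1 z2 by simp
  then have "(a1 * (c1 t - c2 t)) *\<^sub>R e1 = 0" by (simp add: algebra_simps)
  then have a1: "a1 = 0" using e1 t by simp
  then show ?thesis using z e2 by simp
qed

lemma indep3:
  assumes e1: "e1 \<noteq> 0" and e2: "e2 \<noteq> 0" and e3: "e3 \<noteq> 0"
    and h1: "\<And>t. M t *v e1 = c1 t *\<^sub>R e1" and h2: "\<And>t. M t *v e2 = c2 t *\<^sub>R e2"
    and h3: "\<And>t. M t *v e3 = c3 t *\<^sub>R e3"
    and d12: "c1 \<noteq> c2" and d13: "c1 \<noteq> c3" and d23: "c2 \<noteq> c3"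
    and z: "a1 *\<^sub>R e1 + a2 *\<^sub>R e2 + a3 *\<^sub>R e3 = 0"
  shows "a1 = 0 \<and> a2 = 0 \<and> a3 = 0"
proof -
  have ab: "a1 * (c1 t - c3 t) = 0 \<and> a2 * (c2 t - c3 t) = 0" for t
  proof -
    have "M t *v (a1 *\<^sub>R e1 + a2 *\<^sub>R e2 + a3 *\<^sub>R e3) = 0" using z by simp
    then have z1: "(a1 * c1 t) *\<^sub>R e1 + (a2 * c2 t) *\<^sub>R e2 + (a3 * c3 t) *\<^sub>R e3 = 0"
      by (simp add: matrix_vector_right_distrib matrix_vector_mult_scaleR h1 h2 h3)
    have z2: "c3 t *\<^sub>R (a1 *\<^sub>R e1 + a2 *\<^sub>R e2 + a3 *\<^sub>R e3) = 0" using z by simp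
    have "(a1 * c1 t) *\<^sub>R e1 + (a2 * c2 t) *\<^sub>R e2 + (a3 * c3 t) *\<^sub>R e3
          - c3 t *\<^sub>R (a1 *\<^sub>R e1 + a2 *\<^sub>R e2 + a3 *\<^sub>R e3) = 0" using z1 z2 by simp
    then have "(a1 * (c1 t - c3 t)) *\<^sub>R e1 + (a2 * (c2 t - c3 t)) *\<^sub>R e2 = 0"
      by (simp add: algebra_simps)
    then show ?thesis using indep2[OF e1 e2 h1 h2 d12] by blast
  qed
  obtain t1 where t1: "c1 t1 \<noteq> c3 t1" using d13 by blast
  obtain t2 where t2: "c2 t2 \<noteq> c3 t2" using d23 by blast
  have "a1 = 0" using ab[of t1] t1 by simp
  moreover have "a2 = 0" using ab[of t2] t2 by simp
  ultimately show ?thesis using z e3 by simp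
qed


lemma dep3:
  fixes u1 u2 u3 :: "real^'n"
  assumes Ws: "subspace W" and Wd: "dim W = 2" and u: "u1 \<in> W" "u2 \<in> W" "u3 \<in> W"
  shows "\<exists>a b c. \<not>(a = 0 \<and> b = 0 \<and> c = 0) \<and> a *\<^sub>R u1 + b *\<^sub>R u2 + c *\<^sub>R u3 = 0"
proof (cases "u1 = u2 \<or> u1 = u3 \<or> u2 = u3")
  case True
  then show ?thesis
  proof (elim disjE)
    assume "u1 = u2" then show ?thesis by (intro exI[of _ 1] exI[of _ "-1"] exI[of _ 0]) simp
  next
    assume "u1 = u3" then show ?thesis by (intro exI[of _ 1] exI[of _ 0] exI[of _ "-1"]) simp
  next
    assume "u2 = u3" then show ?thesis by (intro exI[of _ 0] exI[of _ 1] exI[of _ "-1"]) simp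
  qed
next
  case False
  then have card: "card {u1, u2, u3} = 3" by auto
  have "dependent {u1, u2, u3}"
  proof (rule ccontr)
    assume "\<not> dependent {u1, u2, u3}"
    then have "card {u1, u2, u3} \<le> dim W" using independent_card_le_dim[of "{u1,u2,u3}" W] u by auto
    then show False using card Wd by simp
  qed
  then obtain f where f: "\<exists>v\<in>{u1,u2,u3}. f v \<noteq> 0" "(\<Sum>v\<in>{u1,u2,u3}. f v *\<^sub>R v) = 0"
    using dependent_finite[of "{u1,u2,u3}"] by auto
  have "(\<Sum>v\<in>{u1,u2,u3}. f v *\<^sub>R v) = f u1 *\<^sub>R u1 + f u2 *\<^sub>R u2 + f u3 *\<^sub>R u3"
    using False by (simp add: add.assoc)
  then show ?thesis using f by (intro exI[of _ "f u1"] exI[of _ "f u2"] exI[of _ "f u3"]) auto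
qed

lemma three_chars:
  assumes e1: "e1 \<noteq> 0" and e2: "e2 \<noteq> 0" and e3: "e3 \<noteq> 0"
    and h1: "\<And>t. M t *v e1 = c1 t *\<^sub>R e1" and h2: "\<And>t. M t *v e2 = c2 t *\<^sub>R e2"
    and h3: "\<And>t. M t *v e3 = c3 t *\<^sub>R e3"
    and d12: "c1 \<noteq> c2" and d13: "c1 \<noteq> c3" and d23: "c2 \<noteq> c3"
  shows False
proof -
  define v where "v = e1 + e2 + e3"
  have v0: "v \<noteq> 0"
  proof
    assume "v = 0"
    then have "1 *\<^sub>R e1 + 1 *\<^sub>R e2 + 1 *\<^sub>R e3 = 0" by (simp add: v_def)
    then have "(1::real) = 0 \<and> (1::real) = 0 \<and> (1::real) = 0"
      by (rule indep3[OF e1 e2 e3 h1 h2 h3 d12 d13 d23])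
    then show False by simp
  qed
  obtain W where Ws: "subspace W" and Wd: "dim W = 2"
    and Wo: "{c *\<^sub>R (M t *v v) | c t. c \<noteq> 0} \<subset> W - {0}"
    using orbit[OF v0] by blast
  have MW: "M t *v v \<in> W" for t
  proof -
    have "1 *\<^sub>R (M t *v v) \<in> {c *\<^sub>R (M t *v v) | c t. c \<noteq> 0}"
      by (rule CollectI, rule exI[of _ 1], rule exI[of _ t]) simp
    then have "1 *\<^sub>R (M t *v v) \<in> W - {0}" by (rule subsetD[OF psubset_imp_subset[OF Wo]])
    then show ?thesis by simp
  qed
  have vW: "v \<in> W"
  proof -
    obtain mu where mu: "mu \<noteq> 0" "M 0 *v v = mu *\<^sub>R v" using M0v by blast
    have "(1/mu) *\<^sub>R (M 0 *v v) \<in> W" using MW Ws subspace_scale by blast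
    then show ?thesis using mu by simp
  qed
  have Mv: "M t *v v = c1 t *\<^sub>R e1 + c2 t *\<^sub>R e2 + c3 t *\<^sub>R e3" for t
    by (simp add: v_def matrix_vector_right_distrib h1 h2 h3)
  have key: "(c2 s - c1 s) * (c3 t - c1 t) = (c3 s - c1 s) * (c2 t - c1 t)" for s t
  proof -
    obtain a b c where abc: "\<not>(a = 0 \<and> b = 0 \<and> c = 0)"
      and z: "a *\<^sub>R v + b *\<^sub>R (M s *v v) + c *\<^sub>R (M t *v v) = 0"
      using dep3[OF Ws Wd vW MW MW] by blast
    have "(a + b * c1 s + c * c1 t) *\<^sub>R e1 + (a + b * c2 s + c * c2 t) *\<^sub>R e2
          + (a + b * c3 s + c * c3 t) *\<^sub>R e3 = a *\<^sub>R v + b *\<^sub>R (M s *v v) + c *\<^sub>R (M t *v v)"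
      unfolding Mv v_def by (simp add: algebra_simps h1 h2 h3)
    then have "(a + b * c1 s + c * c1 t) *\<^sub>R e1 + (a + b * c2 s + c * c2 t) *\<^sub>R e2
          + (a + b * c3 s + c * c3 t) *\<^sub>R e3 = 0" using z by simp
    then have "a + b * c1 s + c * c1 t = 0" "a + b * c2 s + c * c2 t = 0" "a + b * c3 s + c * c3 t = 0"
      using indep3[OF e1 e2 e3 h1 h2 h3 d12 d13 d23] by blast+
    then show ?thesis using det3 abc by blast
  qed
  have nz1: "c1 t \<noteq> 0" for t using eig_nz[OF h1 e1] .
  have mult: "\<exists>k. c1 (s + t) = k * c1 s * c1 t \<and> c2 (s + t) = k * c2 s * c2 t \<and> c3 (s + t) = k * c3 s * c3 t"
    for s t
  proof -
    obtain k where k: "k \<noteq> 0" "M (s + t) = k *\<^sub>R (M s ** M t)" using Mhom by blast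
    have gen: "c (s + t) = k * c s * c t" if e: "e \<noteq> 0" and h: "\<And>t. M t *v e = c t *\<^sub>R e" for e c
    proof -
      have "c (s + t) *\<^sub>R e = M (s + t) *v e" using h by simp
      also have "\<dots> = k *\<^sub>R (M s *v (M t *v e))"
        using k by (simp add: matrix_vector_mul_assoc scaleR_matrix_vector_assoc[symmetric])
      also have "\<dots> = (k * c s * c t) *\<^sub>R e" using h by (simp add: matrix_vector_mult_scaleR)
      finally show ?thesis using e by simp
    qed
    show ?thesis using gen[OF e1 h1] gen[OF e2 h2] gen[OF e3 h3] by blast
  qed
  define A where "A t = c2 t / c1 t - 1" for t
  define B where "B t = c3 t / c1 t - 1" for t
  have Aeq: "A t = (c2 t - c1 t) / c1 t" for t using nz1[of t] by (simp add: A_def field_simps)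
  have Beq: "B t = (c3 t - c1 t) / c1 t" for t using nz1[of t] by (simp add: B_def field_simps)
  have AB: "A s * B t = B s * A t" for s t
    unfolding Aeq Beq using key[of s t] by (simp add: divide_simps mult.commute mult.left_commute)
  have Am: "A (s + t) + 1 = (A s + 1) * (A t + 1)" for s t
  proof -
    obtain k where k: "c1 (s + t) = k * c1 s * c1 t" "c2 (s + t) = k * c2 s * c2 t" using mult by blast
    have "k \<noteq> 0" using nz1[of "s+t"] k by auto
    then show ?thesis using k nz1[of s] nz1[of t] by (simp add: A_def)
  qed
  have Bm: "B (s + t) + 1 = (B s + 1) * (B t + 1)" for s t
  proof -
    obtain k where k: "c1 (s + t) = k * c1 s * c1 t" "c3 (s + t) = k * c3 s * c3 t" using mult by blast
    have "k \<noteq> 0" using nz1[of "s+t"] k by auto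
    then show ?thesis using k nz1[of s] nz1[of t] by (simp add: B_def)
  qed
  obtain s0 where s0: "c1 s0 \<noteq> c2 s0" using d12 by blast
  have "A s0 \<noteq> 0" using s0 nz1[of s0] by (simp add: Aeq)
  then have "(\<forall>t. B t = 0) \<or> (\<forall>t. B t = A t)" using char_alg[OF AB Am Bm] by blast
  then show False
  proof
    assume "\<forall>t. B t = 0"
    then have "c3 t = c1 t" for t using nz1[of t] by (auto simp: Beq)
    then show False using d13 by auto
  next
    assume "\<forall>t. B t = A t"
    then have "c3 t = c2 t" for t using nz1[of t] by (auto simp: A_def B_def)
    then show False using d23 by auto
  qed
qed

end



context fl begin

lemma span_ceig: "span (Collect ceig) = UNIV"
proof -
  have "openin (top_of_set UNIV) (interior Om)" by (simp add: open_openin[symmetric])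
  then have "dim (interior Om) = dim (UNIV :: (real^'n) set)"
    by (rule dim_openin[OF _ subspace_UNIV intne])
  then have "span (interior Om) = UNIV" using dim_eq_full dim_UNIV by metis
  moreover have "interior Om \<subseteq> span (Collect ceig)" using interior_in_span by blast
  then have "span (interior Om) \<subseteq> span (Collect ceig)" by (rule span_minimal[OF _ subspace_span])
  ultimately show ?thesis by blast
qed

definition ch :: "real^'n \<Rightarrow> real \<Rightarrow> real" where
  "ch e t = (SOME l. M t *v e = l *\<^sub>R e)"

lemma ch_prop: "ceig e \<Longrightarrow> M t *v e = ch e t *\<^sub>R e"
  unfolding ch_def ceig_def by (rule someI_ex) blast

lemma eigsp_subspace: "subspace {v. \<forall>t. M t *v v = c t *\<^sub>R v}"
  unfolding subspace_def
  by (simp add: matrix_vector_right_distrib matrix_vector_mult_scaleR scaleR_add_right)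

lemma flow_struct:
  obtains A B c1 c2 kap where "subspace A" "subspace B" "A \<inter> B = {0}"
    "\<And>v. \<exists>a\<in>A. \<exists>b\<in>B. v = a + b" "A \<noteq> {0}" "B \<noteq> {0}"
    "\<And>t a. a \<in> A \<Longrightarrow> M t *v a = c1 t *\<^sub>R a" "\<And>t b. b \<in> B \<Longrightarrow> M t *v b = c2 t *\<^sub>R b"
    "\<And>t. c1 t \<noteq> 0" "\<And>t. c2 t = exp (kap * t) * c1 t" "kap \<noteq> 0"
proof -
  obtain x0 where x0: "x0 \<in> interior Om" using intne by blast
  have "x0 \<noteq> 0" using x0 interior_subset cone0 by blast
  have "Collect ceig \<noteq> {}"
  proof
    assume "Collect ceig = {}"
    then have "x0 \<in> span {}" using interior_in_span[OF x0] by (simp only:)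
    then show False using \<open>x0 \<noteq> 0\<close> by simp
  qed
  then obtain e1 where e1: "ceig e1" by blast
  define c1 where "c1 = ch e1"
  define A where "A = {v. \<forall>t. M t *v v = c1 t *\<^sub>R v}"
  have As: "subspace A" unfolding A_def by (rule eigsp_subspace)
  have e1A: "e1 \<in> A" unfolding A_def c1_def using ch_prop[OF e1] by blast
  have e10: "e1 \<noteq> 0" using e1 ceig_def by blast
  have "\<not> Collect ceig \<subseteq> A"
  proof
    assume "Collect ceig \<subseteq> A"
    then have "span (Collect ceig) \<subseteq> A" by (rule span_minimal[OF _ As])
    then have allA: "M t *v v = c1 t *\<^sub>R v" for t v using span_ceig A_def by auto
    have "M 1 = (c1 1 / c1 0) *\<^sub>R M 0"
    proof (subst matrix_eq, intro allI)
      fix v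
      have "c1 0 \<noteq> 0" using eig_nz[OF allA e10] .
      then show "M 1 *v v = (c1 1 / c1 0) *\<^sub>R M 0 *v v"
        by (simp add: allA scaleR_matrix_vector_assoc[symmetric])
    qed
    then show False using Minj[of 1 "c1 1 / c1 0" 0] by simp
  qed
  then obtain e2 where e2: "ceig e2" and e2A: "e2 \<notin> A" by blast
  have e20: "e2 \<noteq> 0" using e2 ceig_def by blast
  define c2 where "c2 = ch e2"
  define B where "B = {v. \<forall>t. M t *v v = c2 t *\<^sub>R v}"
  have Bs: "subspace B" unfolding B_def by (rule eigsp_subspace)
  have e2B: "e2 \<in> B" unfolding B_def c2_def using ch_prop[OF e2] by blast
  have h1: "M t *v e1 = c1 t *\<^sub>R e1" for t using ch_prop[OF e1] c1_def by simp
  have h2: "M t *v e2 = c2 t *\<^sub>R e2" for t using ch_prop[OF e2] c2_def by simp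
  have d12: "c1 \<noteq> c2"
  proof
    assume "c1 = c2" then have "e2 \<in> A" using h2 A_def by simp
    then show False using e2A by blast
  qed
  have AB: "e \<in> A \<or> e \<in> B" if e: "ceig e" for e
  proof (rule ccontr)
    assume n: "\<not> (e \<in> A \<or> e \<in> B)"
    define c3 where "c3 = ch e"
    have h3: "M t *v e = c3 t *\<^sub>R e" for t using ch_prop[OF e] c3_def by simp
    have "c1 \<noteq> c3"
    proof
      assume "c1 = c3" then have "e \<in> A" unfolding A_def using h3 by simp
      then show False using n by blast
    qed
    moreover have "c2 \<noteq> c3"
    proof
      assume "c2 = c3" then have "e \<in> B" unfolding B_def using h3 by simp
      then show False using n by blast
    qed
    moreover have "e \<noteq> 0" using e ceig_def by blast
    ultimately show False using three_chars[OF e10 e20 _ h1 h2 h3 d12] by blast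
  qed
  have nz1: "c1 t \<noteq> 0" for t using eig_nz[OF h1 e10] .
  have nz2: "c2 t \<noteq> 0" for t using eig_nz[OF h2 e20] .
  have ABi: "A \<inter> B = {0}"
  proof (rule ccontr)
    assume "A \<inter> B \<noteq> {0}"
    moreover have "0 \<in> A \<inter> B" using subspace_0[OF As] subspace_0[OF Bs] by blast
    ultimately obtain v where v: "v \<in> A" "v \<in> B" "v \<noteq> 0" by blast
    have "c1 t = c2 t" for t
    proof -
      have "M t *v v = c1 t *\<^sub>R v" using v(1) unfolding A_def by simp
      moreover have "M t *v v = c2 t *\<^sub>R v" using v(2) unfolding B_def by simp
      ultimately have "c1 t *\<^sub>R v = c2 t *\<^sub>R v" by (rule trans[OF sym])
      then show ?thesis using v(3) scaleR_cancel_right[of "c1 t" v "c2 t"] by blast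
    qed
    then show False using d12 by auto
  qed
  have sum: "\<exists>a\<in>A. \<exists>b\<in>B. v = a + b" for v
  proof -
    define S where "S = {a + b | a b. a \<in> A \<and> b \<in> B}"
    have Ss: "subspace S" unfolding S_def by (rule subspace_sums[OF As Bs])
    have "Collect ceig \<subseteq> S"
    proof
      fix e assume "e \<in> Collect ceig"
      then have "e \<in> A \<or> e \<in> B" using AB by blast
      then show "e \<in> S"
      proof
        assume "e \<in> A" then show "e \<in> S" unfolding S_def using subspace_0[OF Bs]
          by (intro CollectI exI[of _ e] exI[of _ 0]) simp
      next
        assume "e \<in> B" then show "e \<in> S" unfolding S_def using subspace_0[OF As]
          by (intro CollectI exI[of _ 0] exI[of _ e]) simp
      qed
    qed
    then have "span (Collect ceig) \<subseteq> S" by (rule span_minimal[OF _ Ss])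
    then have "UNIV \<subseteq> S" by (simp only: span_ceig)
    then have "v \<in> S" by blast
    then show ?thesis unfolding S_def by blast
  qed
  define rho where "rho t = c2 t / c1 t" for t
  have rmult: "rho (s + t) = rho s * rho t" for s t
  proof -
    obtain k where k: "k \<noteq> 0" "M (s + t) = k *\<^sub>R (M s ** M t)" using Mhom by blast
    have gen: "c (s + t) = k * c s * c t" if e: "e \<noteq> 0" and h: "\<And>t. M t *v e = c t *\<^sub>R e" for e c
    proof -
      have "c (s + t) *\<^sub>R e = M (s + t) *v e" using h by simp
      also have "\<dots> = k *\<^sub>R (M s *v (M t *v e))"
        using k by (simp add: matrix_vector_mul_assoc scaleR_matrix_vector_assoc[symmetric])
      also have "\<dots> = (k * c s * c t) *\<^sub>R e" using h by (simp add: matrix_vector_mult_scaleR)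
      finally show ?thesis using e by simp
    qed
    show ?thesis using gen[OF e10 h1] gen[OF e20 h2] k(1) nz1[of s] nz1[of t] by (simp add: rho_def)
  qed
  have rnz: "rho t \<noteq> 0" for t using nz1 nz2 rho_def by simp
  have rpos: "rho t > 0" for t
  proof -
    have "rho t = rho (t/2) * rho (t/2)" using rmult[of "t/2" "t/2"] by simp
    moreover have "rho (t/2) \<noteq> 0" by (rule rnz)
    ultimately show ?thesis by (simp add: zero_less_mult_iff) linarith
  qed
  have rcont: "continuous_on UNIV rho"
  proof -
    obtain i where i: "e1 $ i \<noteq> 0" using e10 vec_eq_iff[of e1 0] by auto
    obtain j where j: "e2 $ j \<noteq> 0" using e20 vec_eq_iff[of e2 0] by auto
    have Mij: "continuous_on UNIV (\<lambda>t. M t $ a $ b)" for a b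
      by (intro continuous_on_component Mcont)
    have cc: "continuous_on UNIV (\<lambda>t. (M t *v e) $ a)" for e a
      unfolding matrix_vector_mult_def by (simp add: Mij continuous_intros)
    have "c1 t = (M t *v e1) $ i / e1 $ i" for t using h1 i by simp
    moreover have "c2 t = (M t *v e2) $ j / e2 $ j" for t using h2 j by simp
    ultimately have "rho = (\<lambda>t. ((M t *v e2) $ j / e2 $ j) / ((M t *v e1) $ i / e1 $ i))"
      unfolding rho_def by (intro ext) simp
    moreover have "continuous_on UNIV (\<lambda>t. ((M t *v e2) $ j / e2 $ j) / ((M t *v e1) $ i / e1 $ i))"
    proof (rule continuous_on_divide)
      show "continuous_on UNIV (\<lambda>t. (M t *v e2) $ j / e2 $ j)"
        by (rule continuous_on_divide[OF cc continuous_on_const]) (use j in simp)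
      show "continuous_on UNIV (\<lambda>t. (M t *v e1) $ i / e1 $ i)"
        by (rule continuous_on_divide[OF cc continuous_on_const]) (use i in simp)
      show "\<forall>t\<in>UNIV. (M t *v e1) $ i / e1 $ i \<noteq> 0" using nz1 h1 i by simp
    qed
    ultimately show ?thesis by simp
  qed
  define g where "g t = ln (rho t)" for t
  have gadd: "g (s + t) = g s + g t" for s t unfolding g_def rmult ln_mult using rnz[of s] rnz[of t] by simp
  have gcont: "continuous_on UNIV g" unfolding g_def by (rule continuous_on_ln[OF rcont]) (simp add: rnz)
  define kap where "kap = g 1"
  have rexp: "rho t = exp (kap * t)" for t
  proof -
    have "g t = kap * t" unfolding kap_def by (rule additive_cont_linear[OF gadd gcont])
    have "rho t = exp (ln (rho t))" using rpos[of t] by simp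
    also have "\<dots> = exp (kap * t)" using \<open>g t = kap * t\<close> g_def by simp
    finally show ?thesis .
  qed
  have kap0: "kap \<noteq> 0"
  proof
    assume "kap = 0"
    then have "c2 t = c1 t" for t using rexp[of t] nz1[of t] by (simp add: rho_def)
    then show False using d12 by auto
  qed
  have c2e: "c2 t = exp (kap * t) * c1 t" for t using rexp[of t] nz1[of t] by (simp add: rho_def divide_eq_eq)
  show ?thesis
  proof (rule that[OF As Bs ABi sum])
    show "A \<noteq> {0}" using e1A e10 by blast
    show "B \<noteq> {0}" using e2B e20 by blast
    show "M t *v a = c1 t *\<^sub>R a" if "a \<in> A" for t a using that unfolding A_def by simp
    show "M t *v b = c2 t *\<^sub>R b" if "b \<in> B" for t b using that unfolding B_def by simp
    show "c1 t \<noteq> 0" for t by (rule nz1)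
    show "c2 t = exp (kap * t) * c1 t" for t by (rule c2e)
    show "kap \<noteq> 0" by (rule kap0)
  qed
qed

end



context fl begin

lemma final: "reducible Om \<and> hyperbolic_flow M"
proof -
  obtain A B c1 c2 kap where As: "subspace A" and Bs: "subspace B" and ABi: "A \<inter> B = {0}"
    and sum: "\<And>v. \<exists>a\<in>A. \<exists>b\<in>B. v = a + b" and A0: "A \<noteq> {0}" and B0: "B \<noteq> {0}"
    and MA: "\<And>t a. a \<in> A \<Longrightarrow> M t *v a = c1 t *\<^sub>R a"
    and MB: "\<And>t b. b \<in> B \<Longrightarrow> M t *v b = c2 t *\<^sub>R b"
    and nz1: "\<And>t. c1 t \<noteq> 0" and c2e: "\<And>t. c2 t = exp (kap * t) * c1 t" and kap0: "kap \<noteq> 0"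
    using flow_struct by blast
  have Mab: "M t *v (a + b) = c1 t *\<^sub>R (a + exp (kap * t) *\<^sub>R b)" if "a \<in> A" "b \<in> B" for t a b
    using that by (simp add: matrix_vector_right_distrib MA MB c2e scaleR_add_right)
  have hyp: "hyperbolic_flow M"
    unfolding hyperbolic_flow_def
  proof (intro exI conjI)
    show "1 / kap \<noteq> 0" using kap0 by simp
    show "subspace A" "subspace B" "A \<inter> B = {0}" by fact+
    show "{a + b | a b. a \<in> A \<and> b \<in> B} = UNIV" using sum by blast
    show "\<forall>t. \<forall>a\<in>A. \<forall>b\<in>B. a + b \<noteq> 0 \<longrightarrow>
            (\<exists>c. c \<noteq> 0 \<and> M (1 / kap * t) *v (a + b) = c *\<^sub>R (a + exp t *\<^sub>R b))"
    proof (intro allI ballI impI)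
      fix t a b assume ab: "a \<in> A" "b \<in> B"
      have "M (1 / kap * t) *v (a + b) = c1 (1 / kap * t) *\<^sub>R (a + exp t *\<^sub>R b)"
        using Mab[OF ab] kap0 by simp
      then show "\<exists>c. c \<noteq> 0 \<and> M (1 / kap * t) *v (a + b) = c *\<^sub>R (a + exp t *\<^sub>R b)"
        using nz1 by blast
    qed
  qed
  have ray: "a + r *\<^sub>R b \<in> Om" if "a + b \<in> Om" "a \<in> A" "b \<in> B" "r > 0" for a b r
  proof -
    define t where "t = ln r / kap"
    have "exp (kap * t) = r" using kap0 that(4) by (simp add: t_def)
    then have "M t *v (a + b) = c1 t *\<^sub>R (a + r *\<^sub>R b)" using Mab[OF that(2,3)] by simp
    moreover have "M t *v (a + b) \<in> Om" using that(1) M_in by blast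
    ultimately show ?thesis using cone_iff[OF nz1] by simp
  qed
  have comp: "a \<in> Om \<and> b \<in> Om \<and> inner w a * inner w b > 0"
    if x: "a + b \<in> Om" and ab: "a \<in> A" "b \<in> B" and nz: "a \<noteq> 0" "b \<noteq> 0" for a b
  proof -
    have "a \<in> closure Om" unfolding closure_approachable
    proof (intro allI impI)
      fix e :: real assume e: "e > 0"
      define r where "r = e / (norm b + 1)"
      have r: "r > 0" using e by (simp add: r_def add_nonneg_pos)
      have "dist (a + r *\<^sub>R b) a = r * norm b" using r by (simp add: dist_norm)
      also have "\<dots> < r * (norm b + 1)" using r by simp
      also have "\<dots> = e"
      proof -
        have "norm b + 1 \<noteq> 0" using norm_ge_zero[of b] by linarith
        then show ?thesis by (simp add: r_def)
      qed
      finally show "\<exists>y\<in>Om. dist y a < e" using ray[OF x ab r] by blast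
    qed
    then have aO: "a \<in> Om" using clo nz by blast
    have "b \<in> closure Om" unfolding closure_approachable
    proof (intro allI impI)
      fix e :: real assume e: "e > 0"
      define r where "r = (norm a + 1) / e"
      have r: "r > 0" using e by (simp add: r_def add_nonneg_pos)
      have "(1 / r) *\<^sub>R (a + r *\<^sub>R b) \<in> Om" using ray[OF x ab r] cone r by simp
      moreover have "(1 / r) *\<^sub>R (a + r *\<^sub>R b) = (1 / r) *\<^sub>R a + b" using r by (simp add: scaleR_add_right)
      moreover have "dist ((1 / r) *\<^sub>R a + b) b = norm a / r" using r by (simp add: dist_norm)
      moreover have "norm a / r < e"
      proof -
        have "norm a / r = e * (norm a / (norm a + 1))" using e by (simp add: r_def)
        also have "\<dots> < e * 1"
        proof (intro mult_strict_left_mono)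
          have "norm a + 1 > 0" using norm_ge_zero[of a] by linarith
          then show "norm a / (norm a + 1) < 1" by (simp add: divide_less_eq)
        qed (use e in simp)
        finally show ?thesis by simp
      qed
      ultimately show "\<exists>y\<in>Om. dist y b < e" by metis
    qed
    then have bO: "b \<in> Om" using clo nz by blast
    have "inner w a * inner w b > 0"
    proof (rule ccontr)
      assume "\<not> inner w a * inner w b > 0"
      moreover have "inner w a \<noteq> 0" "inner w b \<noteq> 0" using aO bO wnz by auto
      ultimately have neg: "inner w a * inner w b < 0" by (simp add: not_less le_less)
      define r where "r = - inner w a / inner w b"
      have r: "r > 0" using neg \<open>inner w b \<noteq> 0\<close> by (simp add: r_def mult_less_0_iff divide_less_0_iff)
      have "inner w (a + r *\<^sub>R b) = 0" using \<open>inner w b \<noteq> 0\<close> by (simp add: r_def inner_add_right inner_diff_right)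
      then show False using wnz ray[OF x ab r] by blast
    qed
    then show ?thesis using aO bO by blast
  qed
  obtain a0 b0 where a0: "a0 \<in> A" "a0 \<in> Om" and b0: "b0 \<in> B" "b0 \<in> Om"
  proof -
    obtain x0 where x0: "x0 \<in> interior Om" using intne by blast
    obtain e where e: "e > 0" "ball x0 e \<subseteq> Om" using x0 mem_interior by blast
    have x0O: "x0 \<in> Om" using e by auto
    have x00: "x0 \<noteq> 0" using x0O cone0 by blast
    obtain a b where ab: "a \<in> A" "b \<in> B" "x0 = a + b" using sum by blast
    obtain a' where a': "a' \<in> A" "a' \<noteq> 0" using A0 subspace_0[OF As] by blast
    obtain b' where b': "b' \<in> B" "b' \<noteq> 0" using B0 subspace_0[OF Bs] by blast
    show ?thesis
    proof (cases "a = 0 \<or> b = 0")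
      case False then show ?thesis using comp[of a b] ab x0O that by blast
    next
      case True
      show ?thesis
      proof (cases "b = 0")
        case b: True
        then have a: "a \<noteq> 0" using ab x00 by simp
        define d where "d = (e / 2 / norm b') *\<^sub>R b'"
        have dB: "d \<in> B" using b' Bs subspace_scale d_def by blast
        have d0: "d \<noteq> 0" using b' e by (simp add: d_def)
        have "dist x0 (x0 + d) < e" using b' e by (simp add: dist_norm d_def)
        then have "a + d \<in> Om" using e ab b by auto
        then show ?thesis using comp[of a d] ab dB d0 a that by blast
      next
        case b: False
        then have a: "a = 0" using True by simp
        define d where "d = (e / 2 / norm a') *\<^sub>R a'"
        have dA: "d \<in> A" using a' As subspace_scale d_def by blast
        have d0: "d \<noteq> 0" using a' e by (simp add: d_def)
        have "dist x0 (d + x0) < e" using a' e by (simp add: dist_norm d_def)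
        then have "d + b \<in> Om" using e ab a by auto
        then show ?thesis using comp[of d b] ab dA d0 b that by blast
      qed
    qed
  qed
  have pc: "proj_closure Om = Om" unfolding proj_closure_def by (rule clo)
  have red: "reducible Om"
    unfolding reducible_def pc
  proof (rule exI[of _ A], rule exI[of _ B], intro conjI ballI)
    show "subspace A" by fact
    show "subspace B" by fact
    show "A \<noteq> {0}" by fact
    show "B \<noteq> {0}" by fact
    show "A \<inter> B = {0}" by fact
    show "A \<noteq> UNIV" using b0 ABi in_Om_nz by blast
    show "B \<noteq> UNIV" using a0 ABi in_Om_nz by blast
    fix x assume xO: "x \<in> Om"
    obtain a b where ab: "a \<in> A" "b \<in> B" "x = a + b" using sum by blast
    have sgn: "\<exists>u. (u = v \<or> u = - v) \<and> inner w u * inner w x > 0" if "v \<in> Om" for v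
    proof (cases "inner w v * inner w x > 0")
      case True then show ?thesis by blast
    next
      case False
      have "inner w v \<noteq> 0" "inner w x \<noteq> 0" using that xO wnz by auto
      then have "inner w (- v) * inner w x > 0" using False
        by (auto simp: not_less le_less mult_less_0_iff zero_less_mult_iff)
      then show ?thesis by blast
    qed
    show "\<exists>p q. p \<in> A \<inter> Om \<and> q \<in> B \<inter> Om \<and> open_segment p q \<subseteq> Om \<and>
           (\<exists>y\<in>closed_segment p q. \<exists>c. c \<noteq> 0 \<and> x = c *\<^sub>R y)"
    proof (cases "a \<noteq> 0 \<and> b \<noteq> 0")
      case True
      then have c: "a \<in> Om" "b \<in> Om" "inner w a * inner w b > 0" using comp[of a b] ab xO by auto
      have "open_segment a b \<subseteq> Om" using half_convex[OF c] open_closed_segment by blast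
      moreover have "(1/2) *\<^sub>R a + (1/2) *\<^sub>R b \<in> closed_segment a b"
        unfolding closed_segment_def by (intro CollectI exI[of _ "1/2"]) simp
      moreover have "x = 2 *\<^sub>R ((1/2) *\<^sub>R a + (1/2) *\<^sub>R b)" using ab by (simp add: scaleR_add_right)
      ultimately have "open_segment a b \<subseteq> Om \<and> (\<exists>y\<in>closed_segment a b. \<exists>c. c \<noteq> 0 \<and> x = c *\<^sub>R y)"
        by (intro conjI bexI[of _ "(1/2) *\<^sub>R a + (1/2) *\<^sub>R b"] exI[of _ 2]) simp_all
      then show ?thesis using c ab by blast
    next
      case False
      show ?thesis
      proof (cases "b = 0")
        case True
        then have xA: "x \<in> A" using ab by simp
        obtain q where q: "q = b0 \<or> q = - b0" "inner w q * inner w x > 0" using sgn[OF b0(2)] by blast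
        have qB: "q \<in> B" using q(1) b0 Bs subspace_neg by blast
        have qO: "q \<in> Om" using q(1) b0 neg_in by blast
        have "closed_segment x q \<subseteq> Om" using half_convex[OF xO qO] q(2) by (simp add: mult.commute)
        then have "open_segment x q \<subseteq> Om" using open_closed_segment by blast
        moreover have "x \<in> closed_segment x q" by simp
        ultimately have "open_segment x q \<subseteq> Om \<and> (\<exists>y\<in>closed_segment x q. \<exists>c. c \<noteq> 0 \<and> x = c *\<^sub>R y)"
          by (intro conjI bexI[of _ x] exI[of _ 1]) simp_all
        then show ?thesis using xA qB qO xO by blast
      next
        case bnz: False
        then have a: "a = 0" using False by simp
        then have xB: "x \<in> B" using ab by simp
        obtain p where p: "p = a0 \<or> p = - a0" "inner w p * inner w x > 0" using sgn[OF a0(2)] by blast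
        have pA: "p \<in> A" using p(1) a0 As subspace_neg by blast
        have pO: "p \<in> Om" using p(1) a0 neg_in by blast
        have "closed_segment p x \<subseteq> Om" using half_convex[OF pO xO] p(2) by simp
        then have "open_segment p x \<subseteq> Om" using open_closed_segment by blast
        moreover have "x \<in> closed_segment p x" by simp
        ultimately have "open_segment p x \<subseteq> Om \<and> (\<exists>y\<in>closed_segment p x. \<exists>c. c \<noteq> 0 \<and> x = c *\<^sub>R y)"
          by (intro conjI bexI[of _ x] exI[of _ 1]) simp_all
        then show ?thesis using xB pA pO xO by blast
      qed
    qed
  qed
  show ?thesis using red hyp by blast
qed

end


theorem lemma1p4:
  fixes \<Omega> :: "(real^'n) set" and M :: "real \<Rightarrow> real^'n^'n"
  assumes "closed_properly_convex_domain \<Omega>"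
    and "linear_flow M"
    and "preserves M \<Omega>"
  shows "reducible \<Omega> \<and> hyperbolic_flow M"
proof -
  have pc: "proj_cone \<Omega>" and clo: "proj_closure \<Omega> = \<Omega>" and int: "interior \<Omega> \<noteq> {}"
    and prc: "properly_convex \<Omega>"
    using assms(1) unfolding closed_properly_convex_domain_def by auto
  have clo': "closure \<Omega> - {0} = \<Omega>" using clo unfolding proj_closure_def .
  obtain w where w1: "\<forall>v\<in>\<Omega>. inner w v \<noteq> 0" and w2: "compact {v\<in>\<Omega>. inner w v = 1}"
    and w3: "convex {v\<in>\<Omega>. inner w v = 1}"
    using prc unfolding properly_convex_def clo by blast
  have lf: "continuous_on UNIV M" "\<And>t. invertible (M t)"
    "\<And>s t. \<exists>c. c \<noteq> 0 \<and> M (s + t) = c *\<^sub>R (M s ** M t)"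
    "\<And>s t c. M s = c *\<^sub>R M t \<Longrightarrow> s = t"
    "\<And>v. v \<noteq> 0 \<Longrightarrow> \<exists>W. subspace W \<and> dim W = 2 \<and>
             {c *\<^sub>R (M t *v v) | c t. c \<noteq> 0} \<subset> W - {0}"
    using assms(2) unfolding linear_flow_def by blast+
  have pr: "\<And>t. (\<lambda>v. M t *v v) ` \<Omega> = \<Omega>" using assms(3) unfolding preserves_def by blast
  interpret fl \<Omega> M w
  proof
    show "0 \<notin> \<Omega>" using pc proj_cone_def by blast
    show "\<And>v c. v \<in> \<Omega> \<Longrightarrow> c \<noteq> 0 \<Longrightarrow> c *\<^sub>R v \<in> \<Omega>" using pc proj_cone_def by blast
    show "closure \<Omega> - {0} = \<Omega>" by (rule clo')
    show "interior \<Omega> \<noteq> {}" by (rule int)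
    show "\<And>v. v \<in> \<Omega> \<Longrightarrow> inner w v \<noteq> 0" using w1 by blast
    show "compact {v\<in>\<Omega>. inner w v = 1}" by (rule w2)
    show "convex {v\<in>\<Omega>. inner w v = 1}" by (rule w3)
    show "continuous_on UNIV M" by (rule lf(1))
    show "\<And>t. invertible (M t)" by (rule lf(2))
    show "\<And>s t. \<exists>c. c \<noteq> 0 \<and> M (s + t) = c *\<^sub>R (M s ** M t)" by (rule lf(3))
    show "\<And>s t c. M s = c *\<^sub>R M t \<Longrightarrow> s = t" by (rule lf(4))
    show "\<And>v. v \<noteq> 0 \<Longrightarrow> \<exists>W. subspace W \<and> dim W = 2 \<and>
             {c *\<^sub>R (M t *v v) | c t. c \<noteq> 0} \<subset> W - {0}" by (rule lf(5))
    show "\<And>t. (\<lambda>v. M t *v v) ` \<Omega> = \<Omega>" by (rule pr)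
  qed
  show ?thesis by (rule final)
qed

end
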